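(* Let $n\ge2$ and $\mu=2^{n-1}1$. Then $\operatorname{im}(\eta)\subseteq\operatorname{im}(\varphi)$ as subspaces of $\tilde M^{\mu}\cong V_{n,3}$.
   Context: All vector spaces are over $\mathbb C$. A tableau of shape $\lambda\vdash N$ uses each element of $[N]$ once; $C_t$ is its column stabilizer; $\tilde M^\lambda$ is the span of column tabloids $[t]$ modulo $[t]=\operatorname{sgn}(\beta)[\beta t]$, $\beta\in C_t$, with $S_N$ acting by $\sigma[t]=[\sigma t]$. For a column $c$ and $1\le \ell\le$ (length of column $c+1$), $\pi^{\ell}_{c,1}([t])$ is the sum, over all entries $x$ of column $c$ of $t$, of the column tabloids $[t']$ with $t'$ obtained from $t$ by swapping $x$ with the $\ell$-th entry of column $c+1$. For $\mu=2^{m}1^{n-m}$ (columns of lengths $n,m$), $\eta([t])=m[t]-\sum_{j=1}^m\pi^j_{1,1}([t])$; here $m=n-1$. $V_{n,3}$ is the $\mathbb C$-span of left-comb brackets $[[x_1,\dots,x_n],y_1,\dots,y_{n-1}]$ with $\{x_i\}\cup\{y_j\}=[2n-1]$, modulo antisymmetry in the $x$'s and separately in the $y$'s; it is identified with $\tilde M^{2^{n-1}1}$ by sending such a bracket to the column tabloid with first column the $x$'s and second column the $y$'s. The map $\varphi:V_{n,3}\to V_{n,3}$ is $\varphi([[x_1,\dots,x_n],y_1,\dots,y_{n-1}])=[[x_1,\dots,x_n],y_1,\dots,y_{n-1}]-\sum_{i=1}^n(-1)^{n-i}[[y_1,\dots,y_{n-1},x_i],x_1,\dots,\widehat{x_i},\dots,x_n]$.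 *)

theory Defs
  imports "HOL-Combinatorics.Combinatorics"
begin

text \<open>A tableau of shape 2^(n-1) 1 on [2n-1] is a pair (xs, ys) of lists:
  xs = first column (length n, top to bottom), ys = second column (length n-1).\<close>

type_synonym tab = "nat list \<times> nat list"

definition valid_tab :: "nat \<Rightarrow> tab \<Rightarrow> bool" where
  "valid_tab n t \<longleftrightarrow> length (fst t) = n \<and> length (snd t) = n - 1 \<and>
     distinct (fst t @ snd t) \<and> set (fst t @ snd t) = {1..2*n-1}"

type_synonym vec = "tab \<Rightarrow> complex"

definition basis_vec :: "tab \<Rightarrow> vec" where
  "basis_vec t = (\<lambda>s. if s = t then 1 else 0)"

definition lspan :: "vec set \<Rightarrow> vec set" where
  "lspan S = {v. \<exists>F c. finite F \<and> F \<subseteq> S \<and> v = (\<lambda>s. \<Sum>u\<in>F. c u * u s)}"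

definition act :: "(nat \<Rightarrow> nat) \<Rightarrow> tab \<Rightarrow> tab" where
  "act \<sigma> t = (map \<sigma> (fst t), map \<sigma> (snd t))"

definition col_stab :: "nat \<Rightarrow> tab \<Rightarrow> (nat \<Rightarrow> nat) set" where
  "col_stab n t = {\<beta>. \<beta> permutes {1..2*n-1} \<and> \<beta> ` set (fst t) = set (fst t)
                        \<and> \<beta> ` set (snd t) = set (snd t)}"

text \<open>Relations defining the column tabloid space: [t] - sgn(beta) [beta t].\<close>

definition rels :: "nat \<Rightarrow> vec set" where
  "rels n = {v. \<exists>t \<beta>. valid_tab n t \<and> \<beta> \<in> col_stab n t \<and>
       v = (\<lambda>s. basis_vec t s - of_int (sign \<beta>) * basis_vec (act \<beta> t) s)}"

text \<open>Swap the i-th entry (0-based) of column 1 with the l-th entry (1-based) of column 2.\<close>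

definition swap_entries :: "tab \<Rightarrow> nat \<Rightarrow> nat \<Rightarrow> tab" where
  "swap_entries t i l = ((fst t)[i := snd t ! (l - 1)], (snd t)[l - 1 := fst t ! i])"

definition pi_11 :: "nat \<Rightarrow> nat \<Rightarrow> tab \<Rightarrow> vec" where
  "pi_11 n l t = (\<lambda>s. \<Sum>i<n. basis_vec (swap_entries t i l) s)"

text \<open>eta([t]) = m[t] - sum_{j=1}^m pi^j_{1,1}([t]) with m = n - 1 (lifted to tableaux).\<close>

definition eta_tab :: "nat \<Rightarrow> tab \<Rightarrow> vec" where
  "eta_tab n t = (\<lambda>s. of_nat (n - 1) * basis_vec t s - (\<Sum>j=1..n-1. pi_11 n j t s))"

text \<open>phi on the bracket [[x_1..x_n], y_1..y_{n-1}] identified with tableau (xs, ys);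
  index k is 0-based, k = i - 1, so (-1)^(n-i) = (-1)^(n-1-k).\<close>

definition remove_nth :: "nat \<Rightarrow> 'a list \<Rightarrow> 'a list" where
  "remove_nth k xs = take k xs @ drop (Suc k) xs"

definition phi_tab :: "nat \<Rightarrow> tab \<Rightarrow> vec" where
  "phi_tab n t = (\<lambda>s. basis_vec t s -
     (\<Sum>k<n. (-1) ^ (n - 1 - k) *
        basis_vec (snd t @ [fst t ! k], remove_nth k (fst t)) s))"

end

theory Submission
  imports Defs
begin

lemma lspan_gen: "v \<in> S \<Longrightarrow> v \<in> lspan S"
  unfolding lspan_def
  by (rule CollectI, rule exI[of _ "{v}"], rule exI[of _ "\<lambda>_. 1"]) auto

lemma lspan_zero: "(\<lambda>s. 0) \<in> lspan S"
  unfolding lspan_def by (rule CollectI, rule exI[of _ "{}"]) auto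

lemma lspan_mono: "S \<subseteq> T \<Longrightarrow> v \<in> lspan S \<Longrightarrow> v \<in> lspan T"
  unfolding lspan_def by blast

lemma lspan_smult: "v \<in> lspan S \<Longrightarrow> (\<lambda>s. a * v s) \<in> lspan S"
proof -
  assume "v \<in> lspan S"
  then obtain F c where F: "finite F" "F \<subseteq> S" "v = (\<lambda>s. \<Sum>u\<in>F. c u * u s)"
    unfolding lspan_def by blast
  show ?thesis unfolding lspan_def
    by (rule CollectI, rule exI[of _ F], rule exI[of _ "\<lambda>u. a * c u"])
       (simp add: F sum_distrib_left mult.assoc)
qed

lemma lspan_add: "v \<in> lspan S \<Longrightarrow> w \<in> lspan S \<Longrightarrow> (\<lambda>s. v s + w s) \<in> lspan S"
proof -
  assume "v \<in> lspan S" "w \<in> lspan S"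
  then obtain F c G d where F: "finite F" "F \<subseteq> S" "v = (\<lambda>s. \<Sum>u\<in>F. c u * u s)"
    and G: "finite G" "G \<subseteq> S" "w = (\<lambda>s. \<Sum>u\<in>G. d u * u s)"
    unfolding lspan_def by blast
  define e where "e u = (if u \<in> F then c u else 0) + (if u \<in> G then d u else 0)" for u
  have "(\<lambda>s. v s + w s) = (\<lambda>s. \<Sum>u\<in>F \<union> G. e u * u s)"
  proof
    fix s
    have "(\<Sum>u\<in>F \<union> G. e u * u s) = (\<Sum>u\<in>F \<union> G. (if u \<in> F then c u * u s else 0))
        + (\<Sum>u\<in>F \<union> G. (if u \<in> G then d u * u s else 0))"
      unfolding e_def sum.distrib[symmetric] by (rule sum.cong) (auto simp: distrib_right)
    also have "\<dots> = (\<Sum>u\<in>F. c u * u s) + (\<Sum>u\<in>G. d u * u s)"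
      using F(1) G(1) by (simp add: sum.If_cases Int_absorb1 Int_absorb2)
    finally show "v s + w s = (\<Sum>u\<in>F \<union> G. e u * u s)" using F G by simp
  qed
  then show ?thesis unfolding lspan_def using F G by blast
qed

lemma lspan_diff: "v \<in> lspan S \<Longrightarrow> w \<in> lspan S \<Longrightarrow> (\<lambda>s. v s - w s) \<in> lspan S"
  using lspan_add[of v S "\<lambda>s. (-1) * w s"] lspan_smult[of w S "-1"] by simp

lemma lspan_sum: "finite I \<Longrightarrow> (\<And>i. i \<in> I \<Longrightarrow> f i \<in> lspan S) \<Longrightarrow> (\<lambda>s. \<Sum>i\<in>I. f i s) \<in> lspan S"
proof (induction I rule: finite_induct)
  case empty then show ?case using lspan_zero by simp
next
  case (insert x F)
  then show ?case using lspan_add[of "f x" S "\<lambda>s. \<Sum>i\<in>F. f i s"] by simp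
qed

lemma lspan_eq: "v \<in> lspan S \<Longrightarrow> (\<And>s. v s = w s) \<Longrightarrow> w \<in> lspan S"
proof -
  assume "v \<in> lspan S" "\<And>s. v s = w s"
  then have "v = w" by (simp add: fun_eq_iff)
  then show ?thesis using \<open>v \<in> lspan S\<close> by simp
qed

lemma rel_in: "valid_tab n t \<Longrightarrow> \<beta> \<in> col_stab n t \<Longrightarrow>
   (\<lambda>s. basis_vec t s - of_int (sign \<beta>) * basis_vec (act \<beta> t) s) \<in> lspan (rels n)"
  by (rule lspan_gen) (unfold rels_def, blast)

lemma swap_col1:
  assumes v: "valid_tab n (l1 @ [a, b] @ l2, ys)"
  shows "(\<lambda>s. basis_vec (l1 @ [a, b] @ l2, ys) s + basis_vec (l1 @ [b, a] @ l2, ys) s) \<in> lspan (rels n)"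
proof -
  let ?t = "(l1 @ [a, b] @ l2, ys)"
  let ?\<beta> = "transpose a b"
  from v have d: "distinct (l1 @ [a, b] @ l2 @ ys)" and st: "set (l1 @ [a, b] @ l2 @ ys) = {1..2*n-1}"
    unfolding valid_tab_def by auto
  then have ab: "a \<noteq> b" "a \<in> {1..2*n-1}" "b \<in> {1..2*n-1}" by auto
  have m1: "map ?\<beta> l1 = l1" using d by (intro map_idI transpose_apply_other) auto
  have m2: "map ?\<beta> l2 = l2" using d by (intro map_idI transpose_apply_other) auto
  have m3: "map ?\<beta> ys = ys" using d by (intro map_idI transpose_apply_other) auto
  have act: "act ?\<beta> ?t = (l1 @ [b, a] @ l2, ys)" unfolding act_def using m1 m2 m3 by simp
  have cs: "?\<beta> \<in> col_stab n ?t" unfolding col_stab_def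
  proof (intro CollectI conjI)
    show "?\<beta> permutes {1..2*n-1}" using ab by (intro permutes_swap_id) auto
    show "?\<beta> ` set (fst ?t) = set (fst ?t)"
      using arg_cong[OF m1, of set] arg_cong[OF m2, of set] by (auto simp: image_Un image_insert)
    show "?\<beta> ` set (snd ?t) = set (snd ?t)" using arg_cong[OF m3, of set] by simp
  qed
  have sg: "sign ?\<beta> = -1" using ab by (simp add: sign_swap_id)
  show ?thesis using rel_in[OF v cs] unfolding act sg by simp
qed

lemma swap_col2:
  assumes v: "valid_tab n (xs, l1 @ [a, b] @ l2)"
  shows "(\<lambda>s. basis_vec (xs, l1 @ [a, b] @ l2) s + basis_vec (xs, l1 @ [b, a] @ l2) s) \<in> lspan (rels n)"
proof -
  let ?t = "(xs, l1 @ [a, b] @ l2)"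
  let ?\<beta> = "transpose a b"
  from v have d: "distinct (xs @ l1 @ [a, b] @ l2)" and st: "set (xs @ l1 @ [a, b] @ l2) = {1..2*n-1}"
    unfolding valid_tab_def by auto
  then have ab: "a \<noteq> b" "a \<in> {1..2*n-1}" "b \<in> {1..2*n-1}" by auto
  have m1: "map ?\<beta> l1 = l1" using d by (intro map_idI transpose_apply_other) auto
  have m2: "map ?\<beta> l2 = l2" using d by (intro map_idI transpose_apply_other) auto
  have m3: "map ?\<beta> xs = xs" using d by (intro map_idI transpose_apply_other) auto
  have act: "act ?\<beta> ?t = (xs, l1 @ [b, a] @ l2)" unfolding act_def using m1 m2 m3 by simp
  have cs: "?\<beta> \<in> col_stab n ?t" unfolding col_stab_def
  proof (intro CollectI conjI)
    show "?\<beta> permutes {1..2*n-1}" using ab by (intro permutes_swap_id) auto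
    show "?\<beta> ` set (snd ?t) = set (snd ?t)"
      using arg_cong[OF m1, of set] arg_cong[OF m2, of set] by (auto simp: image_Un image_insert)
    show "?\<beta> ` set (fst ?t) = set (fst ?t)" using arg_cong[OF m3, of set] by simp
  qed
  have sg: "sign ?\<beta> = -1" using ab by (simp add: sign_swap_id)
  show ?thesis using rel_in[OF v cs] unfolding act sg by simp
qed

lemma move_col1:
  "valid_tab n (l1 @ [a] @ l2, ys) \<Longrightarrow>
   (\<lambda>s. basis_vec (l1 @ [a] @ l2, ys) s - (-1) ^ length l2 * basis_vec (l1 @ l2 @ [a], ys) s) \<in> lspan (rels n)"
proof (induction l2 arbitrary: l1)
  case Nil
  show ?case by (rule lspan_eq[OF lspan_zero]) simp
next
  case (Cons b l2)
  have v2: "valid_tab n ((l1 @ [b]) @ [a] @ l2, ys)" using Cons.prems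
    by (auto simp: valid_tab_def)
  have A: "(\<lambda>s. basis_vec (l1 @ [a, b] @ l2, ys) s + basis_vec (l1 @ [b, a] @ l2, ys) s) \<in> lspan (rels n)"
    using swap_col1[of n l1 a b l2 ys] Cons.prems by simp
  have B: "(\<lambda>s. basis_vec ((l1 @ [b]) @ [a] @ l2, ys) s - (-1) ^ length l2 * basis_vec ((l1 @ [b]) @ l2 @ [a], ys) s) \<in> lspan (rels n)"
    using Cons.IH[OF v2] .
  show ?case by (rule lspan_eq[OF lspan_diff[OF A B]]) simp
qed

lemma move_col2:
  "valid_tab n (xs, l1 @ [a] @ l2) \<Longrightarrow>
   (\<lambda>s. basis_vec (xs, l1 @ [a] @ l2) s - (-1) ^ length l2 * basis_vec (xs, l1 @ l2 @ [a]) s) \<in> lspan (rels n)"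
proof (induction l2 arbitrary: l1)
  case Nil
  show ?case by (rule lspan_eq[OF lspan_zero]) simp
next
  case (Cons b l2)
  have v2: "valid_tab n (xs, (l1 @ [b]) @ [a] @ l2)" using Cons.prems
    by (auto simp: valid_tab_def)
  have A: "(\<lambda>s. basis_vec (xs, l1 @ [a, b] @ l2) s + basis_vec (xs, l1 @ [b, a] @ l2) s) \<in> lspan (rels n)"
    using swap_col2[of n xs l1 a b l2] Cons.prems by simp
  have B: "(\<lambda>s. basis_vec (xs, (l1 @ [b]) @ [a] @ l2) s - (-1) ^ length l2 * basis_vec (xs, (l1 @ [b]) @ l2 @ [a]) s) \<in> lspan (rels n)"
    using Cons.IH[OF v2] .
  show ?case by (rule lspan_eq[OF lspan_diff[OF A B]]) simp
qed

lemma T1g: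
  assumes v: "valid_tab n (A @ [x] @ B, ys)"
  shows "(\<lambda>s. (-1) ^ length B * basis_vec (A @ B @ [x], ys) s - basis_vec (A @ [x] @ B, ys) s) \<in> lspan (rels n)"
  by (rule lspan_eq[OF lspan_smult[OF move_col1[OF v], of "-1"]]) simp

lemma T2g:
  assumes v: "valid_tab n (A @ [x] @ B, C @ [y] @ E)"
  shows "(\<lambda>s. - ((-1) ^ length B * (-1) ^ length E) * basis_vec (A @ B @ [y], C @ E @ [x]) s
            + basis_vec (A @ [y] @ B, C @ [x] @ E) s) \<in> lspan (rels n)"
proof -
  have v1: "valid_tab n (A @ [y] @ B, C @ E @ [x])" using v by (auto simp: valid_tab_def)
  have v2: "valid_tab n (A @ [y] @ B, C @ [x] @ E)" using v by (auto simp: valid_tab_def)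
  note E1 = move_col1[OF v1]
  note E2 = move_col2[OF v2]
  show ?thesis
    by (rule lspan_eq[OF lspan_add[OF E2 lspan_smult[OF E1, of "(-1) ^ length E"]]])
       (simp add: algebra_simps)
qed

lemma remove_nth_decomp: "k < length xs \<Longrightarrow> remove_nth k xs = take k xs @ drop (Suc k) xs"
  by (simp add: remove_nth_def)

lemma xs_decomp: "k < length xs \<Longrightarrow> xs = take k xs @ [xs ! k] @ drop (Suc k) xs"
  by (simp add: id_take_nth_drop)

lemma P1:
  assumes v: "valid_tab n (xs, ys)" and k: "k < n"
  shows "(\<lambda>s. (-1) ^ (n - 1 - k) * basis_vec (remove_nth k xs @ [(ys @ [xs ! k]) ! (n - 1)],
            remove_nth (n - 1) (ys @ [xs ! k])) s - basis_vec (xs, ys) s) \<in> lspan (rels n)"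
proof -
  have lx: "length xs = n" and ly: "length ys = n - 1" using v by (auto simp: valid_tab_def)
  have v': "valid_tab n (take k xs @ [xs ! k] @ drop (Suc k) xs, ys)"
    using v xs_decomp[of k xs] k lx by simp
  have e1: "(ys @ [xs ! k]) ! (n - 1) = xs ! k" using ly by (simp add: nth_append)
  have e2: "remove_nth (n - 1) (ys @ [xs ! k]) = ys" using ly by (simp add: remove_nth_def)
  have e3: "length (drop (Suc k) xs) = n - 1 - k" using lx by simp
  show ?thesis using T1g[OF v'] unfolding e1 e2 e3
    using remove_nth_decomp[of k xs] xs_decomp[of k xs] k lx by simp
qed

lemma P2:
  assumes v: "valid_tab n (xs, ys)" and k: "k < n" and j: "j < n - 1"
  shows "(\<lambda>s. (-1) ^ (n - 1 - k) * (-1) ^ (n - 1 - j) * basis_vec (remove_nth k xs @ [(ys @ [xs ! k]) ! j],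
            remove_nth j (ys @ [xs ! k])) s + basis_vec (swap_entries (xs, ys) k (Suc j)) s) \<in> lspan (rels n)"
proof -
  have lx: "length xs = n" and ly: "length ys = n - 1" using v by (auto simp: valid_tab_def)
  let ?A = "take k xs" and ?B = "drop (Suc k) xs" and ?C = "take j ys" and ?E = "drop (Suc j) ys"
  have v': "valid_tab n (?A @ [xs ! k] @ ?B, ?C @ [ys ! j] @ ?E)"
    using v xs_decomp[of k xs] xs_decomp[of j ys] k j lx ly by simp
  have e1: "(ys @ [xs ! k]) ! j = ys ! j" using ly j by (simp add: nth_append)
  have e2: "remove_nth j (ys @ [xs ! k]) = ?C @ ?E @ [xs ! k]" using ly j by (simp add: remove_nth_def)
  have e3: "remove_nth k xs = ?A @ ?B" using remove_nth_decomp[of k xs] k lx by simp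
  have e4: "swap_entries (xs, ys) k (Suc j) = (?A @ [ys ! j] @ ?B, ?C @ [xs ! k] @ ?E)"
    unfolding swap_entries_def using k j lx ly by (simp add: upd_conv_take_nth_drop)
  have e5: "(-1) ^ (n - 1 - k) * (-1) ^ (n - 1 - j) = - ((-1) ^ length ?B * (-1) ^ length ?E :: complex)"
  proof -
    have "n - 1 - j = Suc (n - 1 - Suc j)" using j by simp
    then show ?thesis using lx ly by simp
  qed
  show ?thesis using T2g[OF v'] unfolding e1 e2 e3 e4 e5 by simp
qed


theorem mainTheorem6:
  fixes n :: nat
  assumes "n \<ge> 2"
  shows "\<forall>t. valid_tab n t \<longrightarrow>
           eta_tab n t \<in> lspan (phi_tab n ` {t'. valid_tab n t'} \<union> rels n)"
proof (intro allI impI)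
  fix t assume vt: "valid_tab n t"
  obtain xs ys where t: "t = (xs, ys)" by (cases t)
  have v: "valid_tab n (xs, ys)" using vt t by simp
  have lx: "length xs = n" and ly: "length ys = n - 1" using v by (auto simp: valid_tab_def)
  define c :: "nat \<Rightarrow> complex" where "c k = (-1) ^ (n - 1 - k)" for k
  define tk where "tk k = (ys @ [xs ! k], remove_nth k xs)" for k
  define D where "D k m = basis_vec (remove_nth k xs @ [(ys @ [xs ! k]) ! m], remove_nth m (ys @ [xs ! k]))" for k m
  define b where "b = basis_vec (xs, ys)"
  define sw where "sw k j = basis_vec (swap_entries (xs, ys) k (Suc j))" for k j
  let ?W = "lspan (rels n)"
  define R where "R = (\<lambda>s. (\<Sum>k<n. - (c k * D k (n - 1) s - b s)) + (\<Sum>k<n. \<Sum>j<n - 1. - (c k * c j * D k j s + sw k j s)))"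
  have RW: "R \<in> ?W" unfolding R_def
  proof (rule lspan_add)
    show "(\<lambda>s. \<Sum>k<n. - (c k * D k (n - 1) s - b s)) \<in> ?W"
    proof (rule lspan_sum)
      fix k assume "k \<in> {..<n}"
      then have k: "k < n" by simp
      show "(\<lambda>s. - (c k * D k (n - 1) s - b s)) \<in> ?W"
        by (rule lspan_eq[OF lspan_smult[OF P1[OF v k], where a="-1"]]) (simp add: c_def D_def b_def)
    qed simp
    show "(\<lambda>s. \<Sum>k<n. \<Sum>j<n - 1. - (c k * c j * D k j s + sw k j s)) \<in> ?W"
    proof (rule lspan_sum)
      fix k assume "k \<in> {..<n}"
      then have k: "k < n" by simp
      show "(\<lambda>s. \<Sum>j<n - 1. - (c k * c j * D k j s + sw k j s)) \<in> ?W"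
      proof (rule lspan_sum)
        fix j assume "j \<in> {..<n - 1}"
        then have j: "j < n - 1" by simp
        show "(\<lambda>s. - (c k * c j * D k j s + sw k j s)) \<in> ?W"
          by (rule lspan_eq[OF lspan_smult[OF P2[OF v k j], where a="-1"]]) (simp add: c_def D_def sw_def)
      qed simp
    qed simp
  qed
  have phit: "phi_tab n t = (\<lambda>s. b s - (\<Sum>k<n. c k * basis_vec (tk k) s))"
    unfolding phi_tab_def t b_def c_def tk_def by simp
  have phik: "phi_tab n (tk k) = (\<lambda>s. basis_vec (tk k) s - (\<Sum>m<n. c m * D k m s))" for k
    unfolding phi_tab_def tk_def c_def D_def by simp
  have sumD: "(\<Sum>m<n. c m * D k m s) = (\<Sum>j<n - 1. c j * D k j s) + D k (n - 1) s" for k s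
  proof -
    have "n = Suc (n - 1)" using assms by simp
    then have "(\<Sum>m<n. c m * D k m s) = (\<Sum>m<Suc (n - 1). c m * D k m s)" by simp
    also have "\<dots> = (\<Sum>j<n - 1. c j * D k j s) + D k (n - 1) s" by (simp add: c_def)
    finally show ?thesis .
  qed
  have etat: "eta_tab n t s = of_nat (n - 1) * b s - (\<Sum>k<n. \<Sum>j<n - 1. sw k j s)" for s
  proof -
    have "(\<Sum>j=1..n-1. pi_11 n j t s) = (\<Sum>j<n - 1. pi_11 n (Suc j) t s)"
    proof -
      have "{1..n-1} = Suc ` {..<n - 1}"
      proof (intro set_eqI iffI)
        fix x assume "x \<in> {1..n-1}"
        then have "x = Suc (x - 1)" "x - 1 < n - 1" by auto
        then show "x \<in> Suc ` {..<n - 1}" by blast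
      qed auto
      then show ?thesis by (simp add: sum.reindex)
    qed
    also have "\<dots> = (\<Sum>k<n. \<Sum>j<n - 1. sw k j s)"
      unfolding pi_11_def sw_def t by (rule sum.swap)
    finally show ?thesis unfolding eta_tab_def b_def t by simp
  qed
  have main: "eta_tab n t = (\<lambda>s. (-1) * phi_tab n t s + (\<Sum>k<n. (- c k) * phi_tab n (tk k) s) + R s)"
  proof
    fix s
    have nn: "of_nat (n - 1) + 1 = (of_nat n :: complex)" using assms by (simp add: of_nat_diff)
    have r1: "(\<Sum>k<n. - (c k * D k (n - 1) s - b s)) = of_nat n * b s - (\<Sum>k<n. c k * D k (n - 1) s)"
      by (simp add: sum_subtractf sum_negf)
    have r2: "(\<Sum>k<n. \<Sum>j<n - 1. - (c k * c j * D k j s + sw k j s)) =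
       - (\<Sum>k<n. \<Sum>j<n - 1. c k * c j * D k j s) - (\<Sum>k<n. \<Sum>j<n - 1. sw k j s)"
      by (simp add: sum_subtractf sum_negf)
    have "R s = of_nat n * b s - (\<Sum>k<n. c k * D k (n - 1) s) - (\<Sum>k<n. \<Sum>j<n - 1. c k * c j * D k j s)
         - (\<Sum>k<n. \<Sum>j<n - 1. sw k j s)"
      unfolding R_def r1 r2 by simp
    moreover have "(\<Sum>k<n. c k * (\<Sum>m<n. c m * D k m s)) = (\<Sum>k<n. c k * D k (n - 1) s) + (\<Sum>k<n. \<Sum>j<n - 1. c k * c j * D k j s)"
      unfolding sumD by (simp add: sum.distrib distrib_left sum_distrib_left mult.assoc)
    moreover have "(\<Sum>k<n. (- c k) * phi_tab n (tk k) s) = - (\<Sum>k<n. c k * basis_vec (tk k) s) + (\<Sum>k<n. c k * (\<Sum>m<n. c m * D k m s))"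
      unfolding phik by (simp add: sum_subtractf right_diff_distrib sum_negf)
    ultimately show "eta_tab n t s = (-1) * phi_tab n t s + (\<Sum>k<n. (- c k) * phi_tab n (tk k) s) + R s"
      unfolding etat phit using nn[symmetric] by (simp add: algebra_simps)
  qed
  let ?G = "phi_tab n ` {t'. valid_tab n t'} \<union> rels n"
  have Gt: "phi_tab n t \<in> lspan ?G" using vt by (intro lspan_gen) auto
  have Gk: "phi_tab n (tk k) \<in> lspan ?G" if "k < n" for k
  proof (rule lspan_gen)
    let ?A = "take k xs" and ?B = "drop (Suc k) xs" and ?x = "xs ! k"
    have xd: "xs = ?A @ [?x] @ ?B" using xs_decomp[of k xs] that lx by simp
    have rd: "remove_nth k xs = ?A @ ?B" using remove_nth_decomp[of k xs] that lx by simp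
    have dx: "distinct (?A @ [?x] @ ?B @ ys)" and sx: "set (?A @ [?x] @ ?B @ ys) = {1..2*n-1}"
      using v xd unfolding valid_tab_def by (metis append_assoc fst_conv snd_conv)+
    have "valid_tab n (tk k)"
      unfolding tk_def valid_tab_def fst_conv snd_conv rd
    proof (intro conjI)
      show "length (ys @ [?x]) = n" using ly assms by simp
      show "length (?A @ ?B) = n - 1" using lx that by simp
      show "distinct ((ys @ [?x]) @ ?A @ ?B)" using dx by auto
      show "set ((ys @ [?x]) @ ?A @ ?B) = {1..2*n-1}" using sx by auto
    qed
    then show "phi_tab n (tk k) \<in> ?G" by auto
  qed
  have RG: "R \<in> lspan ?G" by (rule lspan_mono[OF _ RW]) auto
  show "eta_tab n t \<in> lspan ?G" unfolding main
    by (intro lspan_add lspan_smult Gt RG lspan_sum Gk) auto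
qed

end
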